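(* Fix $m\ge 2$, $y\in\{1,\dots,m\}$, $1\le k\le m-1$. Let $L^*_k:\mathbb{R}^m\to\mathbb{R}\cup\{+\infty\}$ be $$L^*_k(v)=\begin{cases}\sum_{j\ne y}v_j\log v_j+(1+v_y)\log(1+v_y), & \text{if }\langle\mathbf{1},v\rangle=0\text{ and }v_{\setminus y}\in\Delta^\alpha_k(1),\\ +\infty,&\text{otherwise,}\end{cases}$$ and let the top-$k$ entropy loss be its convex conjugate $L_k(u)=\sup_{v\in\mathbb{R}^m}\{\langle u,v\rangle-L^*_k(v)\}$. Then for every $u\in\mathbb{R}^m$ with $u_y=0$, $$L_k(u)=\max\Big\{\langle u_{\setminus y},x\rangle-(1-s)\log(1-s)-\langle x,\log x\rangle\ :\ x\in\Delta^\alpha_k(1),\ \langle\mathbf{1},x\rangle=s\Big\},$$ and for $k=1$ this equals the softmax loss: $L_1(u)=\log\big(1+\sum_{j\ne y}e^{u_j}\big)=\log\sum_{j}\exp(u_j-u_y)$.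
   Context: $v_{\setminus y}\in\mathbb{R}^{m-1}$ is $v$ with its $y$-th coordinate deleted; $\mathbf{1}$ is the all-ones vector; $\langle x,\log x\rangle=\sum_j x_j\log x_j$ with $0\log0=0$. The top-$k$ simplex ($\alpha$ version) of radius $r$ in $\mathbb{R}^{m-1}$ is $\Delta^\alpha_k(r)=\{x:\ \langle\mathbf{1},x\rangle\le r,\ 0\le x_i\le\tfrac1k\langle\mathbf{1},x\rangle\ \forall i\}$. In the intended application $u_j=f_j(x)-f_y(x)$, so $u_y=0$. *)

theory Defs
  imports "HOL-Analysis.Analysis"
begin

text \<open>Vectors in R^m are represented as functions nat => real, coordinates indexed by {1..m}.
  Vectors in R^(m-1) obtained by deleting coordinate y are functions supported on {1..m} - {y}.\<close>

definition xlogx :: "real \<Rightarrow> real" where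
  "xlogx t = (if t = 0 then 0 else t * ln t)"

definition del_coord :: "nat \<Rightarrow> nat \<Rightarrow> (nat \<Rightarrow> real) \<Rightarrow> (nat \<Rightarrow> real)" where
  "del_coord m y v = (\<lambda>j. if j \<in> {1..m} - {y} then v j else 0)"

definition topk_simplex :: "nat set \<Rightarrow> nat \<Rightarrow> real \<Rightarrow> (nat \<Rightarrow> real) set" where
  "topk_simplex I k r = {x. (\<forall>j. j \<notin> I \<longrightarrow> x j = 0) \<and> sum x I \<le> r \<and>
      (\<forall>i\<in>I. 0 \<le> x i \<and> x i \<le> sum x I / real k)}"

definition Lstar :: "nat \<Rightarrow> nat \<Rightarrow> nat \<Rightarrow> (nat \<Rightarrow> real) \<Rightarrow> ereal" where
  "Lstar m y k v =
     (if sum v {1..m} = 0 \<and> del_coord m y v \<in> topk_simplex ({1..m} - {y}) k 1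
      then ereal ((\<Sum>j\<in>{1..m} - {y}. xlogx (v j)) + xlogx (1 + v y))
      else \<infinity>)"

definition Lk :: "nat \<Rightarrow> nat \<Rightarrow> nat \<Rightarrow> (nat \<Rightarrow> real) \<Rightarrow> ereal" where
  "Lk m y k u = (SUP v \<in> {v. \<forall>j. j \<notin> {1..m} \<longrightarrow> v j = 0}.
                    ereal (\<Sum>j\<in>{1..m}. u j * v j) - Lstar m y k v)"

end

theory Submission imports Defs "HOL-Real_Asymp.Real_Asymp" begin

lemma xlogx_eq: "xlogx t = t * ln t" by (simp add: xlogx_def)

lemma cont_xlogx: "continuous_on {0..} xlogx"
proof -
  have "continuous (at t within {0..}) (\<lambda>t. t * ln t)" if "t \<ge> 0" for t :: real
  proof (cases "t = 0")
    case True
    have "((\<lambda>x::real. x * ln x) \<longlongrightarrow> 0) (at_right 0)" by real_asymp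
    then show ?thesis using True
      by (simp add: continuous_within at_within_Ici_at_right)
  next
    case False
    then have "t > 0" using that by simp
    then have "continuous (at t) (\<lambda>t. t * ln t)"
      by (intro continuous_intros) auto
    then show ?thesis using continuous_at_imp_continuous_at_within by blast
  qed
  then show ?thesis unfolding xlogx_eq[abs_def]
    using continuous_on_eq_continuous_within by (metis atLeast_iff)
qed

lemma coord_cont[continuous_intros]: "continuous_on S (\<lambda>x::nat\<Rightarrow>real. x j)"
  by (rule continuous_on_subset[OF continuous_on_product_coordinates]) auto

definition Fo :: "(nat \<Rightarrow> real) \<Rightarrow> nat set \<Rightarrow> (nat \<Rightarrow> real) \<Rightarrow> real" where
  "Fo u I x = (\<Sum>j\<in>I. u j * x j) - xlogx (1 - sum x I) - (\<Sum>j\<in>I. xlogx (x j))"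

lemma topk_props:
  assumes "x \<in> topk_simplex I k 1" "finite I" "k \<ge> 1"
  shows "sum x I \<le> 1" "\<And>i. i \<in> I \<Longrightarrow> 0 \<le> x i" "\<And>i. i \<in> I \<Longrightarrow> x i \<le> 1"
    "\<And>j. j \<notin> I \<Longrightarrow> x j = 0" "sum x I \<ge> 0"
proof -
  show s: "sum x I \<le> 1" using assms by (simp add: topk_simplex_def)
  show nn: "\<And>i. i \<in> I \<Longrightarrow> 0 \<le> x i" using assms by (simp add: topk_simplex_def)
  show "\<And>j. j \<notin> I \<Longrightarrow> x j = 0" using assms by (simp add: topk_simplex_def)
  show "sum x I \<ge> 0" using nn by (simp add: sum_nonneg)
  fix i assume i: "i \<in> I"
  have "x i \<le> sum x I / real k" using assms i by (simp add: topk_simplex_def)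
  also have "\<dots> \<le> sum x I" using \<open>sum x I \<ge> 0\<close> assms(3)
    by (simp add: divide_le_eq mult_le_cancel_left1)
  finally show "x i \<le> 1" using s by simp
qed

lemma topk_compact:
  assumes "finite I" "k \<ge> 1"
  shows "compact (topk_simplex I k 1)"
proof -
  define S where "S = (\<lambda>j::nat. if j \<in> I then {0..1::real} else {0})"
  have "compactin (product_topology (\<lambda>_. euclidean) UNIV) (PiE UNIV S)"
    by (subst compactin_PiE) (auto simp: S_def)
  then have K: "compact (PiE UNIV S)"
    by (simp add: euclidean_product_topology)
  have C: "closed (topk_simplex I k 1)"
  proof -
    have c1: "closed {x::nat\<Rightarrow>real. \<forall>j. j \<notin> I \<longrightarrow> x j = 0}"
      by (intro closed_Collect_all closed_Collect_imp closed_Collect_eq) auto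
    have cs: "continuous_on UNIV (\<lambda>x::nat\<Rightarrow>real. sum x I)"
      by (intro continuous_intros continuous_on_sum)
    have c2: "closed {x::nat\<Rightarrow>real. sum x I \<le> 1}"
      by (intro closed_Collect_le cs continuous_intros)
    have c3: "closed {x::nat\<Rightarrow>real. \<forall>i\<in>I. 0 \<le> x i \<and> x i \<le> sum x I / real k}"
      unfolding Ball_def
      by (intro closed_Collect_all closed_Collect_imp closed_Collect_conj closed_Collect_le
          continuous_intros cs) (use assms in auto)
    have "topk_simplex I k 1 = {x. \<forall>j. j \<notin> I \<longrightarrow> x j = 0} \<inter> {x. sum x I \<le> 1} \<inter>
        {x::nat\<Rightarrow>real. \<forall>i\<in>I. 0 \<le> x i \<and> x i \<le> sum x I / real k}"
      by (auto simp: topk_simplex_def)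
    then show ?thesis using c1 c2 c3 by (simp add: closed_Int)
  qed
  have "topk_simplex I k 1 \<subseteq> PiE UNIV S"
    using topk_props[OF _ assms] by (auto simp: S_def PiE_iff)
  then have "topk_simplex I k 1 = PiE UNIV S \<inter> topk_simplex I k 1" by blast
  then show ?thesis using compact_Int_closed[OF K C] by simp
qed

lemma Fo_cont:
  assumes "finite I" "k \<ge> 1"
  shows "continuous_on (topk_simplex I k 1) (Fo u I)"
proof -
  have a: "continuous_on (topk_simplex I k 1) (\<lambda>x. xlogx (1 - sum x I))"
    by (rule continuous_on_compose2[OF cont_xlogx]) (auto intro!: continuous_intros
        dest: topk_props(1)[OF _ assms])
  have b: "continuous_on (topk_simplex I k 1) (\<lambda>x. xlogx (x j))" if "j \<in> I" for j
    by (rule continuous_on_compose2[OF cont_xlogx]) (auto intro!: continuous_intros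
        dest: topk_props(2)[OF _ assms that])
  show ?thesis unfolding Fo_def
    by (intro continuous_intros continuous_on_sum a b) auto
qed

lemma Lk_char:
  fixes m y k :: nat and u :: "nat \<Rightarrow> real"
  defines "I \<equiv> {1..m} - {y}"
  assumes y: "y \<in> {1..m}" and k: "1 \<le> k" and uy: "u y = 0"
  shows "Lk m y k u = (SUP x\<in>topk_simplex I k 1. ereal (Fo u I x))"
proof (rule antisym)
  have fI: "finite I" by (simp add: I_def)
  have yI: "y \<notin> I" by (simp add: I_def)
  have split: "\<And>g. sum g {1..m} = g y + sum g I"
    using sum.remove[of "{1..m}" y] y by (simp add: I_def)
  show "Lk m y k u \<le> (SUP x\<in>topk_simplex I k 1. ereal (Fo u I x))"
    unfolding Lk_def
  proof (rule SUP_least)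
    fix v :: "nat \<Rightarrow> real" assume "v \<in> {v. \<forall>j. j \<notin> {1..m} \<longrightarrow> v j = 0}"
    show "ereal (\<Sum>j\<in>{1..m}. u j * v j) - Lstar m y k v
          \<le> (SUP x\<in>topk_simplex I k 1. ereal (Fo u I x))"
    proof (cases "sum v {1..m} = 0 \<and> del_coord m y v \<in> topk_simplex I k 1")
      case False
      then have "Lstar m y k v = \<infinity>" using False unfolding Lstar_def I_def by simp
      then show ?thesis by simp
    next
      case True
      define x where "x = del_coord m y v"
      have xv: "\<And>j. j \<in> I \<Longrightarrow> x j = v j" by (simp add: x_def del_coord_def I_def)
      have sx: "sum x I = sum v I" using xv by (rule sum.cong[OF refl])
      have vy: "1 + v y = 1 - sum x I" using True split[of v] sx by simp
      have e1: "(\<Sum>j\<in>{1..m}. u j * v j) = (\<Sum>j\<in>I. u j * x j)"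
      proof -
        have "(\<Sum>j\<in>I. u j * v j) = (\<Sum>j\<in>I. u j * x j)" using xv by (intro sum.cong) auto
        then show ?thesis using split[of "\<lambda>j. u j * v j"] uy by simp
      qed
      have e2: "(\<Sum>j\<in>I. xlogx (v j)) = (\<Sum>j\<in>I. xlogx (x j))"
        using xv by (intro sum.cong) auto
      have "ereal (\<Sum>j\<in>{1..m}. u j * v j) - Lstar m y k v = ereal (Fo u I x)"
      proof -
        have "Lstar m y k v = ereal ((\<Sum>j\<in>I. xlogx (v j)) + xlogx (1 + v y))"
          using True unfolding Lstar_def I_def by simp
        then show ?thesis unfolding e1 by (simp add: e2 vy Fo_def)
      qed
      moreover have "x \<in> topk_simplex I k 1" using True by (simp add: x_def)
      ultimately show ?thesis by (auto intro: SUP_upper2)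
    qed
  qed
  show "(SUP x\<in>topk_simplex I k 1. ereal (Fo u I x)) \<le> Lk m y k u"
  proof (rule SUP_least)
    fix x assume x: "x \<in> topk_simplex I k 1"
    define v where "v = x(y := - sum x I)"
    have x0: "\<And>j. j \<notin> I \<Longrightarrow> x j = 0" using x by (simp add: topk_simplex_def)
    have vI: "\<And>j. j \<in> I \<Longrightarrow> v j = x j" using yI by (auto simp: v_def)
    have vdom: "v \<in> {v. \<forall>j. j \<notin> {1..m} \<longrightarrow> v j = 0}"
      using x0 y by (auto simp: v_def I_def)
    have dc: "del_coord m y v = x"
      using x0 by (auto simp: del_coord_def v_def I_def)
    have sv: "sum v I = sum x I" using vI by (rule sum.cong[OF refl])
    have s0: "sum v {1..m} = 0" using split[of v] sv by (simp add: v_def)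
    have e1: "(\<Sum>j\<in>{1..m}. u j * v j) = (\<Sum>j\<in>I. u j * x j)"
      proof -
      have "(\<Sum>j\<in>I. u j * v j) = (\<Sum>j\<in>I. u j * x j)" using vI by (intro sum.cong) auto
      then show ?thesis using split[of "\<lambda>j. u j * v j"] uy by simp
    qed
    have e2: "(\<Sum>j\<in>I. xlogx (v j)) = (\<Sum>j\<in>I. xlogx (x j))"
      using vI by (intro sum.cong) auto
    have "ereal (\<Sum>j\<in>{1..m}. u j * v j) - Lstar m y k v = ereal (Fo u I x)"
    proof -
      have "Lstar m y k v = ereal ((\<Sum>j\<in>I. xlogx (v j)) + xlogx (1 + v y))"
        using s0 x dc unfolding Lstar_def I_def by simp
      then show ?thesis unfolding e1 e2 by (simp add: Fo_def v_def)
    qed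
    then show "ereal (Fo u I x) \<le> Lk m y k u"
      unfolding Lk_def using vdom by (auto intro: SUP_upper2)
  qed
qed

lemma pointwise:
  fixes p a Z :: real
  assumes "p \<ge> 0" "Z > 0"
  shows "p * a - xlogx p - p * ln Z \<le> exp a / Z - p"
proof (cases "p = 0")
  case True then show ?thesis using assms by (simp add: xlogx_def)
next
  case False
  then have p: "p > 0" using assms by simp
  have "ln (exp a / (Z * p)) \<le> exp a / (Z * p) - 1"
    by (rule ln_le_minus_one) (use p assms in simp)
  moreover have "ln (exp a / (Z * p)) = a - ln Z - ln p"
    using p assms by (simp add: ln_div ln_mult)
  ultimately have "a - ln Z - ln p \<le> exp a / (Z * p) - 1" by simp
  then have "p * (a - ln Z - ln p) \<le> p * (exp a / (Z * p) - 1)"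
    using p by (simp add: mult_left_mono)
  then show ?thesis using p by (simp add: xlogx_def algebra_simps)
qed

lemma softmax_bound:
  assumes x: "x \<in> topk_simplex I k 1" and fI: "finite I" and k: "k \<ge> 1"
  shows "Fo u I x \<le> ln (1 + (\<Sum>j\<in>I. exp (u j)))"
proof -
  define Z where "Z = 1 + (\<Sum>j\<in>I. exp (u j))"
  have Zp: "Z > 0" unfolding Z_def by (smt (verit) exp_gt_zero sum_nonneg)
  have nn: "\<And>j. j \<in> I \<Longrightarrow> 0 \<le> x j" using topk_props(2)[OF x fI k] .
  have s1: "sum x I \<le> 1" using topk_props(1)[OF x fI k] .
  have A: "(\<Sum>j\<in>I. x j * u j - xlogx (x j) - x j * ln Z) \<le> (\<Sum>j\<in>I. exp (u j) / Z - x j)"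
    by (rule sum_mono) (use pointwise nn Zp in auto)
  have B: "(1 - sum x I) * 0 - xlogx (1 - sum x I) - (1 - sum x I) * ln Z \<le> exp 0 / Z - (1 - sum x I)"
    by (rule pointwise) (use s1 Zp in auto)
  have E: "(\<Sum>j\<in>I. exp (u j) / Z - x j) = (\<Sum>j\<in>I. exp (u j)) / Z - sum x I"
    by (simp add: sum_subtractf sum_divide_distrib)
  have F: "(\<Sum>j\<in>I. exp (u j)) / Z + 1 / Z = 1"
    using Zp by (simp add: Z_def add_divide_distrib[symmetric])
  have "(\<Sum>j\<in>I. exp (u j) / Z - x j) + (exp 0 / Z - (1 - sum x I)) = 0"
    unfolding E using F by simp
  then have C: "(\<Sum>j\<in>I. exp (u j) / Z - x j) + (exp 0 / Z - (1 - sum x I)) = 0" .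
  have D: "(\<Sum>j\<in>I. x j * u j - xlogx (x j) - x j * ln Z) =
      (\<Sum>j\<in>I. u j * x j) - (\<Sum>j\<in>I. xlogx (x j)) - sum x I * ln Z"
    by (simp add: sum_subtractf sum_distrib_left sum_distrib_right mult.commute)
  have "Fo u I x - ln Z \<le> 0"
    using A B C D unfolding Fo_def by (simp add: algebra_simps)
  then show ?thesis by (simp add: Z_def)
qed

lemma softmax_attained:
  assumes fI: "finite I"
  shows "\<exists>x\<in>topk_simplex I 1 1. Fo u I x = ln (1 + (\<Sum>j\<in>I. exp (u j)))"
proof -
  define S where "S = (\<Sum>j\<in>I. exp (u j))"
  define Z where "Z = 1 + S"
  have S0: "S \<ge> 0" unfolding S_def by (simp add: sum_nonneg)
  have Zp: "Z > 0" using S0 by (simp add: Z_def)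
  define x where "x = (\<lambda>j. if j \<in> I then exp (u j) / Z else 0)"
  have sx: "sum x I = S / Z" by (simp add: x_def S_def sum_divide_distrib)
  have mem: "x \<in> topk_simplex I 1 1"
    unfolding topk_simplex_def
  proof (intro CollectI conjI ballI allI impI)
    show "sum x I \<le> 1" using sx Zp S0 by (simp add: Z_def)
    fix i assume i: "i \<in> I"
    show "0 \<le> x i" using Zp by (simp add: x_def)
    have "x i \<le> sum x I"
      by (rule member_le_sum[OF i]) (use Zp in \<open>auto simp: x_def\<close>, rule fI)
    then show "x i \<le> sum x I / real 1" by simp
  qed (simp add: x_def)
  have xl: "xlogx (x j) = u j * x j - x j * ln Z" if "j \<in> I" for j
    using that Zp by (simp add: x_def xlogx_def ln_div field_simps)
  have sxl: "(\<Sum>j\<in>I. xlogx (x j)) = (\<Sum>j\<in>I. u j * x j) - sum x I * ln Z"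
    using xl by (simp add: sum_subtractf sum_distrib_right)
  have oneminus: "1 - sum x I = 1 / Z" using sx Zp by (simp add: Z_def field_simps)
  have "Fo u I x = (S / Z) * ln Z + (1/Z) * ln Z"
    unfolding Fo_def sxl oneminus unfolding sx using Zp by (simp add: xlogx_def ln_div)
  also have "\<dots> = ((S + 1) / Z) * ln Z" by (simp add: add_divide_distrib algebra_simps)
  also have "\<dots> = ln Z" using Zp by (simp add: Z_def add.commute)
  finally show ?thesis using mem by (auto simp: Z_def S_def)
qed

theorem proposition8:
  fixes m y k :: nat and u :: "nat \<Rightarrow> real"
  assumes "m \<ge> 2" and "y \<in> {1..m}" and "1 \<le> k" and "k \<le> m - 1"
    and "u y = 0"
  shows "(\<exists>x\<in>topk_simplex ({1..m} - {y}) k 1.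
            Lk m y k u = ereal ((\<Sum>j\<in>{1..m} - {y}. u j * x j)
                 - xlogx (1 - sum x ({1..m} - {y})) - (\<Sum>j\<in>{1..m} - {y}. xlogx (x j))))
       \<and> (\<forall>x\<in>topk_simplex ({1..m} - {y}) k 1.
            ereal ((\<Sum>j\<in>{1..m} - {y}. u j * x j)
                 - xlogx (1 - sum x ({1..m} - {y})) - (\<Sum>j\<in>{1..m} - {y}. xlogx (x j)))
            \<le> Lk m y k u)
       \<and> (k = 1 \<longrightarrow>
            Lk m y k u = ereal (ln (1 + (\<Sum>j\<in>{1..m} - {y}. exp (u j)))) \<and>
            Lk m y k u = ereal (ln (\<Sum>j\<in>{1..m}. exp (u j - u y))))"
proof -
  define I where "I = {1..m} - {y}"
  have fI: "finite I" by (simp add: I_def)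
  have k1: "1 \<le> k" using assms by simp
  have ch: "Lk m y k u = (SUP x\<in>topk_simplex I k 1. ereal (Fo u I x))"
    unfolding I_def using Lk_char assms by blast
  have ne: "topk_simplex I k 1 \<noteq> {}"
  proof -
    have "(\<lambda>_. 0) \<in> topk_simplex I k 1" by (simp add: topk_simplex_def)
    then show ?thesis by blast
  qed
  obtain x0 where x0: "x0 \<in> topk_simplex I k 1"
      and mx: "\<And>x. x \<in> topk_simplex I k 1 \<Longrightarrow> Fo u I x \<le> Fo u I x0"
    using continuous_attains_sup[OF topk_compact[OF fI k1] ne Fo_cont[OF fI k1]] by blast
  have L0: "Lk m y k u = ereal (Fo u I x0)"
    unfolding ch
  proof (rule antisym)
    show "(SUP x\<in>topk_simplex I k 1. ereal (Fo u I x)) \<le> ereal (Fo u I x0)"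
      by (rule SUP_least) (use mx in simp)
    show "ereal (Fo u I x0) \<le> (SUP x\<in>topk_simplex I k 1. ereal (Fo u I x))"
      using x0 by (rule SUP_upper)
  qed
  have P1: "\<exists>x\<in>topk_simplex I k 1. Lk m y k u = ereal (Fo u I x)"
    using x0 L0 by blast
  have P2: "\<forall>x\<in>topk_simplex I k 1. ereal (Fo u I x) \<le> Lk m y k u"
    using mx L0 by simp
  have P3: "k = 1 \<longrightarrow> Lk m y k u = ereal (ln (1 + (\<Sum>j\<in>I. exp (u j))))"
  proof
    assume "k = 1"
    obtain xs where xs: "xs \<in> topk_simplex I 1 1" "Fo u I xs = ln (1 + (\<Sum>j\<in>I. exp (u j)))"
      using softmax_attained[OF fI] by blast
    have "Fo u I x0 \<le> ln (1 + (\<Sum>j\<in>I. exp (u j)))"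
      using softmax_bound[OF x0 fI k1] .
    moreover have "Fo u I xs \<le> Fo u I x0" using mx xs(1) \<open>k = 1\<close> by simp
    ultimately show "Lk m y k u = ereal (ln (1 + (\<Sum>j\<in>I. exp (u j))))"
      using L0 xs(2) by simp
  qed
  have P4: "(\<Sum>j\<in>{1..m}. exp (u j - u y)) = 1 + (\<Sum>j\<in>I. exp (u j))"
    using sum.remove[of "{1..m}" y "\<lambda>j. exp (u j - u y)"] assms by (simp add: I_def)
  show ?thesis
    using P1 P2 P3 unfolding P4 unfolding I_def Fo_def by simp
qed

end
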